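(* Consider a \textsc{Brick+} payment channel, as described in the context, under its system model. Then \textsc{Brick+} achieves liveness under asynchrony: every valid operation (update or close) on the state of the channel is eventually either committed or invalidated.
   Context: Setting and model. Two channel parties $A,B$, a committee of Wardens $W_1,\dots,W_n$ with $n=3f+1$, at most $f$ Byzantine and the others honest, threshold $t=2f+1$, and an external auditor. Participants are computationally bounded; communication channels are secure, the hash function $H$ is cryptographically secure, signatures unforgeable. The blockchain supports smart contracts and satisfies persistence and liveness (a transaction given to all honest parties long enough is eventually included). The network is asynchronous (every message between honest parties is eventually delivered, no known bound). The richest channel party is rational and will not deviate from honest behavior if it would be discovered and punished; the auditor is rational. States have sequence numbers $1,2,\dots$; $s_i$ is the state with sequence number $i$; $\sigma(\cdot)$ is the joint signature of $A$ and $B$. Protocol \textsc{Brick+}. Open: parties sign and publish $open(H(W_1),\dots,H(W_n),t,s_1,F)$; Wardens lock collateral. Update: given the previous hash-chain head $H_p$, parties sign and exchange $H_s=H(H_p,H(s_i,r_i),i)$ with random $r_i$, forming the announcement $\{M,\sigma(M),H_s\}$, $M=i$. Consistent Broadcast: each party sends the announcement to all Wardens; a Warden checks both signatures and that the sequence number is exactly one higher than stored; if it has already published a closing announcement it ignores the update, otherwise it stores the announcement, signs $M$, and returns the signature; a party considers the state committed once it holds $t$ Warden signatures. Optimistic Close is disabled. Pessimistic Close: on a closing request each Warden publishes on-chain its signed stored announcement with a close flag and stops signing updates; once $t$ are on-chain the party publishes the state $s_i$ with the maximum announced sequence number, $r_i$, and the parties' signatures; the smart contract verifies and closes the channel in $s_i$.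 Audit: the auditor posts an access request on-chain; Wardens verify it and run Pessimistic Close; parties send the state history to the auditor, who verifies it against the published hash-chain head. Definitions. A state $s_i$ is valid if both parties have signed it, it is the freshest (no valid $s_{i+1}$), and it has not been invalidated (invalidated if the channel closes in $s_{i-1}$). A state is committed if signed by at least $2f+1$ Wardens, or valid and in a block in the persistent part of the blockchain. Liveness: any valid operation (update, close) on the channel state will eventually be committed or invalidated. *)

theory Defs
  imports Main
begin

text \<open>Abstract operational model of the Brick+ channel (Consistent Broadcast + Pessimistic Close
  + audit-triggered close), with idealized cryptography.  Wardens are the numbers below nW f;
  the Byzantine wardens form the set B.\<close>

definition nW :: "nat \<Rightarrow> nat" where "nW f = 3 * f + 1"
definition thr :: "nat \<Rightarrow> nat" where "thr f = 2 * f + 1"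

record cfg =
  c_lat    :: nat                      \<comment> \<open>sequence number of the latest state jointly signed by A and B\<close>
  c_st     :: "nat \<Rightarrow> nat"             \<comment> \<open>sequence number stored by each (honest) warden\<close>
  c_cl     :: "nat \<Rightarrow> bool"            \<comment> \<open>warden has published its closing announcement\<close>
  c_sg     :: "nat \<Rightarrow> nat set"         \<comment> \<open>wardens whose signature on announcement i the parties hold\<close>
  c_net    :: "(nat \<times> nat) set"         \<comment> \<open>update announcements (warden, seq) in transit\<close>
  c_req    :: "nat set"                 \<comment> \<open>wardens to which a closing/access request is in transit\<close>
  c_txs    :: "(nat \<times> nat) set"         \<comment> \<open>closing announcements (warden, seq) submitted, not yet on chain\<close>
  c_onch   :: "nat \<Rightarrow> nat option"      \<comment> \<open>closing announcement of each warden on chain\<close>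
  c_closed :: "nat option"              \<comment> \<open>channel closed on chain in the state with this sequence number\<close>

datatype act =
    Issue                 \<comment> \<open>parties sign the next state and send its announcement to all wardens\<close>
  | Deliver nat nat       \<comment> \<open>honest warden w processes the announcement with sequence number i\<close>
  | ByzSign nat nat       \<comment> \<open>Byzantine warden signs announcement i\<close>
  | ByzPost nat nat       \<comment> \<open>Byzantine warden submits a closing announcement for existing state j\<close>
  | Request               \<comment> \<open>a party (closing request) or the auditor (access request) triggers close\<close>
  | RecvReq nat           \<comment> \<open>honest warden w receives the closing/access request\<close>
  | Include nat nat       \<comment> \<open>closing announcement of warden w for state j is included in a block\<close>
  | Finalize              \<comment> \<open>party publishes the max announced state; the contract closes the channel\<close>
  | Idle

definition ann :: "cfg \<Rightarrow> nat set" where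
  "ann c = {j. \<exists>w. c_onch c w = Some j}"

definition init :: "cfg \<Rightarrow> bool" where
  "init c \<longleftrightarrow> c = \<lparr> c_lat = 1, c_st = (\<lambda>_. 1), c_cl = (\<lambda>_. False), c_sg = (\<lambda>_. {}),
      c_net = {}, c_req = {}, c_txs = {}, c_onch = (\<lambda>_. None), c_closed = None \<rparr>"

definition step :: "nat \<Rightarrow> nat set \<Rightarrow> cfg \<Rightarrow> act \<Rightarrow> cfg \<Rightarrow> bool" where
  "step f B c a c' = (case a of
     Issue \<Rightarrow> c_closed c = None \<and> (c_lat c = 1 \<or> thr f \<le> card (c_sg c (c_lat c))) \<and>
        c' = c\<lparr>c_lat := Suc (c_lat c),
               c_net := c_net c \<union> {(w, Suc (c_lat c)) | w. w < nW f}\<rparr>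
   | Deliver w i \<Rightarrow> w \<notin> B \<and> w < nW f \<and> (w, i) \<in> c_net c \<and> (c_cl c w \<or> i \<le> Suc (c_st c w)) \<and>
        c' = (if \<not> c_cl c w \<and> i = Suc (c_st c w)
              then c\<lparr>c_net := c_net c - {(w, i)}, c_st := (c_st c)(w := i),
                     c_sg := (c_sg c)(i := insert w (c_sg c i))\<rparr>
              else c\<lparr>c_net := c_net c - {(w, i)}\<rparr>)
   | ByzSign w i \<Rightarrow> w \<in> B \<and> i \<le> c_lat c \<and> c' = c\<lparr>c_sg := (c_sg c)(i := insert w (c_sg c i))\<rparr>
   | ByzPost w j \<Rightarrow> w \<in> B \<and> 1 \<le> j \<and> j \<le> c_lat c \<and> c' = c\<lparr>c_txs := insert (w, j) (c_txs c)\<rparr>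
   | Request \<Rightarrow> c_closed c = None \<and> c' = c\<lparr>c_req := {w. w < nW f}\<rparr>
   | RecvReq w \<Rightarrow> w \<notin> B \<and> w \<in> c_req c \<and>
        c' = (if c_cl c w then c\<lparr>c_req := c_req c - {w}\<rparr>
              else c\<lparr>c_req := c_req c - {w}, c_cl := (c_cl c)(w := True),
                     c_txs := insert (w, c_st c w) (c_txs c)\<rparr>)
   | Include w j \<Rightarrow> (w, j) \<in> c_txs c \<and>
        c' = c\<lparr>c_txs := c_txs c - {(w, j)},
               c_onch := (if c_onch c w = None then (c_onch c)(w := Some j) else c_onch c)\<rparr>
   | Finalize \<Rightarrow> c_closed c = None \<and> thr f \<le> card {w. c_onch c w \<noteq> None} \<and>
        c' = c\<lparr>c_closed := Some (Max (ann c))\<rparr>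
   | Idle \<Rightarrow> c' = c)"

definition enabled :: "nat \<Rightarrow> nat set \<Rightarrow> cfg \<Rightarrow> act \<Rightarrow> bool" where
  "enabled f B c a \<longleftrightarrow> (\<exists>c'. step f B c a c')"

definition weakly_fair :: "nat \<Rightarrow> nat set \<Rightarrow> (nat \<Rightarrow> cfg) \<Rightarrow> (nat \<Rightarrow> act) \<Rightarrow> act \<Rightarrow> bool" where
  "weakly_fair f B r l a \<longleftrightarrow>
     (\<forall>k. (\<forall>k'\<ge>k. enabled f B (r k') a) \<longrightarrow> (\<exists>k'\<ge>k. l k' = a))"

text \<open>Admissible asynchronous executions: eventual delivery to honest wardens, blockchain
  liveness for honest submissions, and the party eventually publishing the closing state.
  Issue, Request and all Byzantine actions are unconstrained.\<close>
definition brick_run :: "nat \<Rightarrow> nat set \<Rightarrow> (nat \<Rightarrow> cfg) \<Rightarrow> (nat \<Rightarrow> act) \<Rightarrow> bool" where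
  "brick_run f B r l \<longleftrightarrow>
     init (r 0) \<and> (\<forall>k. step f B (r k) (l k) (r (Suc k))) \<and>
     (\<forall>w i. w \<notin> B \<longrightarrow> weakly_fair f B r l (Deliver w i)) \<and>
     (\<forall>w. w \<notin> B \<longrightarrow> weakly_fair f B r l (RecvReq w)) \<and>
     (\<forall>w j. w \<notin> B \<longrightarrow> weakly_fair f B r l (Include w j)) \<and>
     weakly_fair f B r l Finalize"

definition committed :: "nat \<Rightarrow> cfg \<Rightarrow> nat \<Rightarrow> bool" where
  "committed f c i \<longleftrightarrow> thr f \<le> card (c_sg c i) \<or> c_closed c = Some i"

definition invalidated :: "cfg \<Rightarrow> nat \<Rightarrow> bool" where
  "invalidated c i \<longleftrightarrow> c_closed c = Some (i - 1)"

end

theory Submission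
  imports Defs
begin


definition "i1 c \<longleftrightarrow> 1 \<le> c_lat c"
definition "i2 f c \<longleftrightarrow> c_req c \<subseteq> {..<nW f}"
definition "i3 f c \<longleftrightarrow> (\<forall>w. c_onch c w \<noteq> None \<longrightarrow> w < nW f)"
definition "i4 f c \<longleftrightarrow> (\<forall>w j. (w,j) \<in> c_txs c \<longrightarrow> w < nW f \<and> 1 \<le> j \<and> j \<le> c_lat c)"
definition "i5 c \<longleftrightarrow> (\<forall>w j. c_onch c w = Some j \<longrightarrow> 1 \<le> j \<and> j \<le> c_lat c)"
definition "i6 f c \<longleftrightarrow> (\<forall>i. c_sg c i \<subseteq> {..<nW f})"
definition "i7 B c \<longleftrightarrow> (\<forall>w. w \<notin> B \<longrightarrow> 1 \<le> c_st c w \<and> c_st c w \<le> c_lat c)"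
definition "i8 B c \<longleftrightarrow> (\<forall>w i. w \<notin> B \<longrightarrow> w \<in> c_sg c i \<longrightarrow> i \<le> c_st c w)"
definition "i9 B c \<longleftrightarrow> (\<forall>w i. w \<notin> B \<longrightarrow> 2 \<le> i \<longrightarrow> i \<le> c_st c w \<longrightarrow> w \<in> c_sg c i)"
definition "i10 B c \<longleftrightarrow> (\<forall>w j. w \<notin> B \<longrightarrow> (w,j) \<in> c_txs c \<longrightarrow> c_cl c w \<and> j = c_st c w)"
definition "i11 B c \<longleftrightarrow> (\<forall>w j. w \<notin> B \<longrightarrow> c_onch c w = Some j \<longrightarrow> c_cl c w \<and> j = c_st c w)"
definition "i12 B c \<longleftrightarrow> (\<forall>w. w \<notin> B \<longrightarrow> c_cl c w \<longrightarrow> c_onch c w \<noteq> None \<or> (w, c_st c w) \<in> c_txs c)"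
definition "i13 f B c \<longleftrightarrow> (\<forall>w i. w \<notin> B \<longrightarrow> w < nW f \<longrightarrow> \<not> c_cl c w \<longrightarrow> c_st c w < i \<longrightarrow> i \<le> c_lat c \<longrightarrow> (w,i) \<in> c_net c)"
definition "i14 c \<longleftrightarrow> (\<forall>w i. (w,i) \<in> c_net c \<longrightarrow> i \<le> c_lat c)"

definition inv :: "nat \<Rightarrow> nat set \<Rightarrow> cfg \<Rightarrow> bool" where
"inv f B c \<longleftrightarrow> i1 c \<and> i2 f c \<and> i3 f c \<and> i4 f c \<and> i5 c \<and> i6 f c \<and> i7 B c \<and> i8 B c \<and> i9 B c
   \<and> i10 B c \<and> i11 B c \<and> i12 B c \<and> i13 f B c \<and> i14 c"

lemma inv_init: "init c \<Longrightarrow> inv f B c"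
  unfolding init_def inv_def i1_def i2_def i3_def i4_def i5_def i6_def i7_def i8_def i9_def
   i10_def i11_def i12_def i13_def i14_def by auto

lemmas stepc = step_def[split_format(complete)]

lemma p1: "step f B c a c' \<Longrightarrow> i1 c \<Longrightarrow> i1 c'"
  by (cases a) (auto simp: step_def i1_def split: if_splits)
lemma p2: "step f B c a c' \<Longrightarrow> i2 f c \<Longrightarrow> i2 f c'"
  by (cases a) (auto simp: step_def i2_def split: if_splits)
lemma p14: "step f B c a c' \<Longrightarrow> i14 c \<Longrightarrow> i14 c'"
  by (cases a) (auto simp: step_def i14_def intro: le_SucI split: if_splits)
lemma p4: "step f B c a c' \<Longrightarrow> B \<subseteq> {..<nW f} \<Longrightarrow> i4 f c \<Longrightarrow> i2 f c \<Longrightarrow> i7 B c \<Longrightarrow> i4 f c'"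
  by (cases a) (auto simp: step_def i4_def i2_def i7_def intro: le_SucI split: if_splits)
lemma p3: "step f B c a c' \<Longrightarrow> i3 f c \<Longrightarrow> i4 f c \<Longrightarrow> i3 f c'"
  by (cases a) (auto simp: step_def i3_def i4_def split: if_splits)
lemma p5: "step f B c a c' \<Longrightarrow> i5 c \<Longrightarrow> i4 f c \<Longrightarrow> i5 c'"
  by (cases a) (auto simp: step_def i5_def i4_def intro: le_SucI split: if_splits)
lemma p6: "step f B c a c' \<Longrightarrow> B \<subseteq> {..<nW f} \<Longrightarrow> i6 f c \<Longrightarrow> i6 f c'"
  by (cases a) (auto simp: step_def i6_def split: if_splits)
lemma p7: "step f B c a c' \<Longrightarrow> i7 B c \<Longrightarrow> i14 c \<Longrightarrow> i7 B c'"
  by (cases a) (auto simp: step_def i7_def i14_def split: if_splits)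
lemma p8: "step f B c a c' \<Longrightarrow> i8 B c \<Longrightarrow> i8 B c'"
  by (cases a) (auto simp: step_def i8_def intro: le_SucI split: if_splits)
lemma p9: "step f B c a c' \<Longrightarrow> i9 B c \<Longrightarrow> i9 B c'"
  by (cases a) (auto simp: step_def i9_def le_Suc_eq split: if_splits)
lemma p10: "step f B c a c' \<Longrightarrow> i10 B c \<Longrightarrow> i10 B c'"
  by (cases a) (auto simp: step_def i10_def split: if_splits)
lemma p11: "step f B c a c' \<Longrightarrow> i11 B c \<Longrightarrow> i10 B c \<Longrightarrow> i11 B c'"
  by (cases a) (auto simp: step_def i11_def i10_def split: if_splits)
lemma p12: "step f B c a c' \<Longrightarrow> i12 B c \<Longrightarrow> i12 B c'"
  by (cases a) (auto simp: step_def i12_def split: if_splits)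
lemma p13: "step f B c a c' \<Longrightarrow> i13 f B c \<Longrightarrow> i13 f B c'"
  by (cases a) (auto simp: step_def i13_def split: if_splits)

lemma inv_step: "B \<subseteq> {..<nW f} \<Longrightarrow> inv f B c \<Longrightarrow> step f B c a c' \<Longrightarrow> inv f B c'"
  unfolding inv_def using p1 p2 p3 p4 p5 p6 p7 p8 p9 p10 p11 p12 p13 p14 by metis




lemma s_lat: "step f B c a c' \<Longrightarrow> c_lat c \<le> c_lat c'"
  by (cases a) (auto simp: step_def split: if_splits)
lemma s_sg: "step f B c a c' \<Longrightarrow> c_sg c i \<subseteq> c_sg c' i"
  by (cases a) (auto simp: step_def split: if_splits)
lemma s_onch: "step f B c a c' \<Longrightarrow> c_onch c w \<noteq> None \<Longrightarrow> c_onch c' w \<noteq> None"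
  by (cases a) (auto simp: step_def split: if_splits)
lemma s_closed: "step f B c a c' \<Longrightarrow> c_closed c \<noteq> None \<Longrightarrow> c_closed c' \<noteq> None"
  by (cases a) (auto simp: step_def split: if_splits)
lemma s_cl: "step f B c a c' \<Longrightarrow> c_cl c w \<Longrightarrow> c_cl c' w"
  by (cases a) (auto simp: step_def split: if_splits)
lemma s_st: "step f B c a c' \<Longrightarrow> c_st c w \<le> c_st c' w"
  by (cases a) (auto simp: step_def split: if_splits)
lemma s_stcl: "step f B c a c' \<Longrightarrow> c_cl c w \<Longrightarrow> c_st c' w = c_st c w"
  by (cases a) (auto simp: step_def split: if_splits)
lemma s_reqcl: "step f B c a c' \<Longrightarrow> w < nW f \<Longrightarrow> w \<in> c_req c \<or> c_cl c w \<Longrightarrow> w \<in> c_req c' \<or> c_cl c' w"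
  by (cases a) (auto simp: step_def split: if_splits)
lemma s_fin: "step f B c a c' \<Longrightarrow> c_closed c = None \<Longrightarrow> c_closed c' \<noteq> None \<Longrightarrow>
   a = Finalize \<and> c_closed c' = Some (Max (ann c)) \<and> thr f \<le> card {w. c_onch c w \<noteq> None}"
  by (cases a) (auto simp: step_def split: if_splits)
lemma s_latch: "step f B c a c' \<Longrightarrow> c_lat c' \<noteq> c_lat c \<Longrightarrow>
   a = Issue \<and> (c_lat c = 1 \<or> thr f \<le> card (c_sg c (c_lat c)))"
  by (cases a) (auto simp: step_def split: if_splits)
lemma s_noreq: "step f B c a c' \<Longrightarrow> a \<noteq> Request \<Longrightarrow> c_req c = {} \<and> (\<forall>w. \<not> c_cl c w) \<Longrightarrow>
   c_req c' = {} \<and> (\<forall>w. \<not> c_cl c' w)"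
  by (cases a) (auto simp: step_def split: if_splits)
lemma s_deliver: "step f B c (Deliver w i) c' \<Longrightarrow> \<not> c_cl c w \<Longrightarrow> i = Suc (c_st c w) \<Longrightarrow> c_st c' w = i"
  by (auto simp: step_def)
lemma s_recv: "step f B c (RecvReq w) c' \<Longrightarrow> c_cl c' w"
  by (auto simp: step_def split: if_splits)
lemma s_incl: "step f B c (Include w j) c' \<Longrightarrow> c_onch c' w \<noteq> None"
  by (auto simp: step_def split: if_splits)
lemma s_req: "step f B c Request c' \<Longrightarrow> c_req c' = {..<nW f}"
  by (auto simp: step_def)

lemma persist: assumes "\<And>n. P n \<Longrightarrow> P (Suc n)" "P n" "n \<le> m" shows "P m"
  using assms(3,2) by (induction m rule: dec_induct) (auto intro: assms(1))

lemma fin_choice: fixes P :: "'a \<Rightarrow> nat \<Rightarrow> bool" shows "finite H \<Longrightarrow> (\<forall>w\<in>H. \<exists>K. \<forall>m\<ge>K. P w m) \<Longrightarrow> \<exists>K. \<forall>w\<in>H. \<forall>m\<ge>K. P w m"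
proof (induction H rule: finite_induct)
  case empty then show ?case by simp
next
  case (insert x F)
  then obtain K1 where K1: "\<forall>w\<in>F. \<forall>m\<ge>K1. P w m" by auto
  from insert obtain K2 where K2: "\<forall>m\<ge>K2. P x m" by auto
  show ?case
  proof (intro exI[of _ "max K1 K2"] ballI allI impI)
    fix w m assume "w \<in> insert x F" "max K1 K2 \<le> m"
    then show "P w m" using K1 K2 by auto
  qed
qed

lemma card_honest: assumes "B \<subseteq> {..<nW f}" "card B \<le> f" shows "thr f \<le> card ({..<nW f} - B)"
proof -
  have "finite B" using assms(1) finite_subset by blast
  then have "card ({..<nW f} - B) = nW f - card B" using assms(1) by (simp add: card_Diff_subset)
  then show ?thesis using assms(2) by (simp add: nW_def thr_def)
qed

context
  fixes f B r l
  assumes R: "brick_run f B r l" and HB: "B \<subseteq> {..<nW f}"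
begin

lemma stp: "step f B (r n) (l n) (r (Suc n))"
  using R unfolding brick_run_def by blast

lemma invr: "inv f B (r n)"
proof (induction n)
  case 0 then show ?case using R inv_init unfolding brick_run_def by blast
next
  case (Suc n) then show ?case using inv_step[OF HB _ stp] by blast
qed

lemma fair: "weakly_fair f B r l a \<Longrightarrow> (\<forall>k'\<ge>k. enabled f B (r k') a) \<Longrightarrow> \<exists>k'\<ge>k. l k' = a"
  unfolding weakly_fair_def by blast

lemma fairRecv: "w \<notin> B \<Longrightarrow> weakly_fair f B r l (RecvReq w)"
  using R unfolding brick_run_def by blast
lemma fairDel: "w \<notin> B \<Longrightarrow> weakly_fair f B r l (Deliver w i)"
  using R unfolding brick_run_def by blast
lemma fairIncl: "w \<notin> B \<Longrightarrow> weakly_fair f B r l (Include w j)"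
  using R unfolding brick_run_def by blast
lemma fairFin: "weakly_fair f B r l Finalize"
  using R unfolding brick_run_def by blast

lemma pers: "(\<And>c c' a. step f B c a c' \<Longrightarrow> P c \<Longrightarrow> P c') \<Longrightarrow> P (r n) \<Longrightarrow> n \<le> m \<Longrightarrow> P (r m)"
proof -
  assume a: "\<And>c c' a. step f B c a c' \<Longrightarrow> P c \<Longrightarrow> P c'" "P (r n)" "n \<le> m"
  have "\<And>n. P (r n) \<Longrightarrow> P (r (Suc n))" using a(1) stp by blast
  then show ?thesis using persist[of "\<lambda>n. P (r n)"] a(2,3) by blast
qed

lemma onch_mono: "c_onch (r n) w \<noteq> None \<Longrightarrow> n \<le> m \<Longrightarrow> c_onch (r m) w \<noteq> None"
  by (rule pers[where P="\<lambda>c. c_onch c w \<noteq> None", OF s_onch])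
lemma closed_mono: "c_closed (r n) \<noteq> None \<Longrightarrow> n \<le> m \<Longrightarrow> c_closed (r m) \<noteq> None"
  by (rule pers[where P="\<lambda>c. c_closed c \<noteq> None", OF s_closed])
lemma sg_mono: "n \<le> m \<Longrightarrow> c_sg (r n) i \<subseteq> c_sg (r m) i"
  by (rule pers[where P="\<lambda>c. c_sg (r n) i \<subseteq> c_sg c i"]) (auto dest: s_sg[of _ _ _ _ _ i])
lemma lat_mono: "n \<le> m \<Longrightarrow> c_lat (r n) \<le> c_lat (r m)"
  by (rule pers[where P="\<lambda>c. c_lat (r n) \<le> c_lat c"]) (auto dest: s_lat)
lemma st_mono: "n \<le> m \<Longrightarrow> c_st (r n) w \<le> c_st (r m) w"
  by (rule pers[where P="\<lambda>c. c_st (r n) w \<le> c_st c w"]) (auto dest: s_st[of _ _ _ _ _ w])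

lemma onch_ev:
  assumes w: "w \<notin> B" "w < nW f" and rq: "l k0 = Request"
  shows "\<exists>K. c_onch (r K) w \<noteq> None"
proof -
  have "c_req (r (Suc k0)) = {..<nW f}" using s_req stp[of k0] rq by metis
  then have A: "\<forall>m\<ge>Suc k0. w \<in> c_req (r m) \<or> c_cl (r m) w"
  proof (intro allI impI)
    fix m assume "Suc k0 \<le> m"
    have cl: "step f B c a c' \<Longrightarrow> w \<in> c_req c \<or> c_cl c w \<Longrightarrow> w \<in> c_req c' \<or> c_cl c' w" for c c' a
      using s_reqcl w(2) by blast
    have "w \<in> c_req (r (Suc k0)) \<or> c_cl (r (Suc k0)) w"
      using w \<open>c_req (r (Suc k0)) = {..<nW f}\<close> by auto
    then show "w \<in> c_req (r m) \<or> c_cl (r m) w"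
      apply (rule pers[where P="\<lambda>c. w \<in> c_req c \<or> c_cl c w" and n="Suc k0", rotated])
      using \<open>Suc k0 \<le> m\<close> cl by blast+
  qed
  obtain k1 where k1: "c_cl (r k1) w"
  proof (rule ccontr)
    assume "\<not> thesis"
    then have ncl: "\<forall>m. \<not> c_cl (r m) w" using that by blast
    have "\<forall>m\<ge>Suc k0. enabled f B (r m) (RecvReq w)"
      using A ncl w unfolding enabled_def step_def by auto
    then obtain m where "l m = RecvReq w" using fair[OF fairRecv[OF w(1)]] by blast
    then have "c_cl (r (Suc m)) w" using s_recv stp[of m] by metis
    then show False using ncl by blast
  qed
  define j where "j = c_st (r k1) w"
  have B1: "\<forall>m\<ge>k1. c_cl (r m) w \<and> c_st (r m) w = j"
  proof (intro allI impI)
    fix m assume "k1 \<le> m"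
    have cl: "step f B c a c' \<Longrightarrow> c_cl c w \<and> c_st c w = j \<Longrightarrow> c_cl c' w \<and> c_st c' w = j" for c c' a
      using s_cl s_stcl by metis
    have "c_cl (r k1) w \<and> c_st (r k1) w = j" using k1 j_def by simp
    then show "c_cl (r m) w \<and> c_st (r m) w = j"
      apply (rule pers[where P="\<lambda>c. c_cl c w \<and> c_st c w = j" and n=k1, rotated])
      using \<open>k1 \<le> m\<close> cl by blast+
  qed
  show ?thesis
  proof (rule ccontr)
    assume "\<not> ?thesis"
    then have no: "\<forall>K. c_onch (r K) w = None" by blast
    have "\<forall>m\<ge>k1. (w, j) \<in> c_txs (r m)"
      using B1 no invr w(1) unfolding inv_def i12_def by metis
    then have "\<forall>m\<ge>k1. enabled f B (r m) (Include w j)"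
      unfolding enabled_def step_def by auto
    then obtain m where "l m = Include w j" using fair[OF fairIncl[OF w(1)]] by blast
    then have "c_onch (r (Suc m)) w \<noteq> None" using s_incl stp[of m] by metis
    then show False using no by auto
  qed
qed

lemma closes:
  assumes cB: "card B \<le> f" and rq: "l k0 = Request"
  shows "\<exists>k'. c_closed (r k') \<noteq> None"
proof (rule ccontr)
  assume "\<not> ?thesis"
  then have NC: "\<forall>k'. c_closed (r k') = None" by blast
  let ?H = "{..<nW f} - B"
  have "\<forall>w\<in>?H. \<exists>K. \<forall>m\<ge>K. c_onch (r m) w \<noteq> None"
  proof
    fix w assume "w \<in> ?H"
    then have "w \<notin> B" "w < nW f" by auto
    then obtain K where "c_onch (r K) w \<noteq> None" using onch_ev[of w k0] rq by blast
    then show "\<exists>K. \<forall>m\<ge>K. c_onch (r m) w \<noteq> None"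
      using onch_mono[of K w] by blast
  qed
  then obtain K where K: "\<forall>w\<in>?H. \<forall>m\<ge>K. c_onch (r m) w \<noteq> None"
    using fin_choice[of ?H "\<lambda>w m. c_onch (r m) w \<noteq> None"] by blast
  have "\<forall>m\<ge>K. enabled f B (r m) Finalize"
  proof (intro allI impI)
    fix m assume "K \<le> m"
    then have sub: "?H \<subseteq> {w. c_onch (r m) w \<noteq> None}" using K by blast
    have "{w. c_onch (r m) w \<noteq> None} \<subseteq> {..<nW f}" using invr[of m] unfolding inv_def i3_def by blast
    then have "card ?H \<le> card {w. c_onch (r m) w \<noteq> None}"
      using sub by (intro card_mono) (auto intro: finite_subset)
    then have "thr f \<le> card {w. c_onch (r m) w \<noteq> None}" using card_honest[OF HB cB] by linarith
    then show "enabled f B (r m) Finalize" using NC unfolding enabled_def step_def by auto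
  qed
  then obtain m where "l m = Finalize" using fair[OF fairFin] by blast
  then have "c_closed (r (Suc m)) \<noteq> None" using stp[of m] unfolding step_def by auto
  then show False using NC by auto
qed


lemma issue_live:
  assumes cB: "card B \<le> f" and iss: "l k = Issue" and L_def: "L = c_lat (r (Suc k))"
  shows "\<exists>k'. committed f (r k') L \<or> invalidated (r k') L"
proof -
  have sk: "step f B (r k) Issue (r (Suc k))" using stp[of k] iss by simp
  then have c0: "c_closed (r k) = None" and L: "L = Suc (c_lat (r k))"
    and pre: "c_lat (r k) = 1 \<or> thr f \<le> card (c_sg (r k) (c_lat (r k)))"
    unfolding step_def L_def by auto
  have lat1: "1 \<le> c_lat (r k)" using invr[of k] unfolding inv_def i1_def by blast
  have L2: "2 \<le> L" using L lat1 by simp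
  show ?thesis
  proof (cases "\<exists>k'. thr f \<le> card (c_sg (r k') L)")
    case True then show ?thesis unfolding committed_def by blast
  next
    case nA: False
    have nA': "\<forall>k'. card (c_sg (r k') L) < thr f" using nA not_le by blast
    have latL: "\<forall>m\<ge>Suc k. c_lat (r m) = L"
    proof (intro allI impI)
      fix m assume "Suc k \<le> m" then show "c_lat (r m) = L"
      proof (induction m rule: dec_induct)
        case base show ?case by (simp add: L_def)
      next
        case (step m)
        show ?case
        proof (rule ccontr)
          assume ne: "c_lat (r (Suc m)) \<noteq> L"
          then have "c_lat (r (Suc m)) \<noteq> c_lat (r m)" using step.IH by simp
          then have "c_lat (r m) = 1 \<or> thr f \<le> card (c_sg (r m) (c_lat (r m)))"
            using s_latch[OF stp[of m]] by blast
          moreover have "c_lat (r m) \<noteq> 1" using step.IH L2 by simp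
          ultimately have "thr f \<le> card (c_sg (r m) L)" using step.IH by simp
          then show False using nA'[rule_format, of m] by simp
        qed
      qed
    qed
    show ?thesis
    proof (cases "\<exists>k'. c_closed (r k') \<noteq> None")
      case True
      define n where "n = (LEAST n. c_closed (r n) \<noteq> None)"
      have cn: "c_closed (r n) \<noteq> None" using LeastI_ex[OF True] n_def by simp
      have bef: "\<forall>m<n. c_closed (r m) = None"
      proof (intro allI impI)
        fix m assume "m < n"
        then show "c_closed (r m) = None" using not_less_Least[of m "\<lambda>n. c_closed (r n) \<noteq> None"] n_def by auto
      qed
      have "c_closed (r 0) = None" using R unfolding brick_run_def init_def by auto
      then have "n \<noteq> 0" using cn by metis
      then obtain p where np: "n = Suc p" by (cases n) auto
      have cp: "c_closed (r p) = None" using bef np by simp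
      from s_fin[OF stp[of p] cp] cn np have fin: "l p = Finalize"
        and cl: "c_closed (r n) = Some (Max (ann (r p)))"
        and qo: "thr f \<le> card {w. c_onch (r p) w \<noteq> None}" by auto
      have pk: "Suc k \<le> p"
      proof (rule ccontr)
        assume "\<not> Suc k \<le> p" then have "p \<le> k" by simp
        show False
        proof (cases "p = k")
          case True then show False using fin iss by simp
        next
          case False then have "n \<le> k" using \<open>p \<le> k\<close> np by simp
          then have "c_closed (r k) \<noteq> None" using closed_mono cn by blast
          then show False using c0 by simp
        qed
      qed
      have lp: "c_lat (r p) = L" using latL pk by simp
      define Oc where "Oc = {w. c_onch (r p) w \<noteq> None}"
      have Osub: "Oc \<subseteq> {..<nW f}" using invr[of p] unfolding inv_def i3_def Oc_def by blast
      have finO: "finite Oc" using Osub finite_subset by blast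
      have annO: "ann (r p) = (\<lambda>w. the (c_onch (r p) w)) ` Oc" unfolding ann_def Oc_def by force
      have fa: "finite (ann (r p))" using annO finO by simp
      have "Oc \<noteq> {}"
      proof
        assume "Oc = {}" then show False using qo unfolding Oc_def thr_def by simp
      qed
      then have ne: "ann (r p) \<noteq> {}" using annO by simp
      have ub: "\<forall>x\<in>ann (r p). x \<le> L" using invr[of p] lp unfolding inv_def i5_def ann_def by auto
      have lb: "\<exists>x\<in>ann (r p). L - 1 \<le> x"
      proof (cases "c_lat (r k) = 1")
        case True then have "L - 1 = 1" using L by simp
        then show ?thesis using ne invr[of p] unfolding inv_def i5_def ann_def by auto
      next
        case False
        then have t0: "thr f \<le> card (c_sg (r k) (L - 1))" using pre L by simp
        define S where "S = c_sg (r p) (L - 1)"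
        have Ssub: "S \<subseteq> {..<nW f}" using invr[of p] unfolding inv_def i6_def S_def by blast
        have finS: "finite S" using Ssub finite_subset by blast
        have "k \<le> p" using pk by simp
        then have "c_sg (r k) (L-1) \<subseteq> S" using sg_mono S_def by simp
        then have tS: "thr f \<le> card S" using t0 card_mono[OF finS] le_trans by blast
        have "card (S \<union> Oc) \<le> nW f" using Ssub Osub card_mono[of "{..<nW f}" "S \<union> Oc"] by simp
        moreover have "card S + card Oc = card (S \<union> Oc) + card (S \<inter> Oc)" using card_Un_Int finS finO by blast
        moreover have "thr f \<le> card Oc" using qo Oc_def by simp
        ultimately have gt: "card (S \<inter> Oc) > f" using tS unfolding thr_def nW_def by linarith
        have "finite B" using HB finite_subset by blast
        have "\<not> (S \<inter> Oc \<subseteq> B)"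
        proof
          assume "S \<inter> Oc \<subseteq> B"
          then have "card (S \<inter> Oc) \<le> card B" using card_mono[OF \<open>finite B\<close>] by blast
          then show False using gt cB by linarith
        qed
        then obtain w where w: "w \<in> S" "w \<in> Oc" "w \<notin> B" by blast
        then obtain x where x: "c_onch (r p) w = Some x" unfolding Oc_def by auto
        have "x = c_st (r p) w" using invr[of p] w(3) x unfolding inv_def i11_def by blast
        moreover have "L - 1 \<le> c_st (r p) w" using invr[of p] w(1,3) unfolding inv_def i8_def S_def by blast
        moreover have "x \<in> ann (r p)" using x unfolding ann_def by blast
        ultimately show ?thesis by auto
      qed
      have "L - 1 \<le> Max (ann (r p))" using lb fa Max_ge le_trans by blast
      moreover have "Max (ann (r p)) \<le> L" using ub fa ne by simp
      ultimately have "Max (ann (r p)) = L \<or> Max (ann (r p)) = L - 1" by arith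
      then have "committed f (r n) L \<or> invalidated (r n) L"
        using cl unfolding committed_def invalidated_def by auto
      then show ?thesis by blast
    next
      case False
      then have NC: "\<forall>k'. c_closed (r k') = None" by simp
      have noreq: "\<forall>n. l n \<noteq> Request"
      proof (intro allI notI)
        fix n assume "l n = Request"
        then obtain k' where "c_closed (r k') \<noteq> None" using closes[OF cB] by blast
        then show False using NC by auto
      qed
      have nocl: "c_req (r n) = {} \<and> (\<forall>w. \<not> c_cl (r n) w)" for n
      proof (induction n)
        case 0 then show ?case using R unfolding brick_run_def init_def by auto
      next
        case (Suc n) then show ?case using s_noreq[OF stp[of n]] noreq by blast
      qed
      have prog: "\<exists>m. j \<le> c_st (r m) w" if w: "w \<notin> B" "w < nW f" and j: "j \<le> L" for w j
        using j
      proof (induction j)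
        case 0 then show ?case by simp
      next
        case (Suc j)
        then obtain m1 where m1: "j \<le> c_st (r m1) w" by auto
        show ?case
        proof (rule ccontr)
          assume "\<not> ?case"
          then have lt: "\<forall>m. c_st (r m) w < Suc j" by (simp add: not_le)
          define m2 where "m2 = max m1 (Suc k)"
          have eq: "\<forall>m\<ge>m2. c_st (r m) w = j"
          proof (intro allI impI)
            fix m assume "m2 \<le> m"
            then have "m1 \<le> m" unfolding m2_def by simp
            then have "j \<le> c_st (r m) w" using st_mono[of m1 m w] m1 by simp
            then show "c_st (r m) w = j" using lt[rule_format, of m] by linarith
          qed
          have "\<forall>m\<ge>m2. enabled f B (r m) (Deliver w (Suc j))"
          proof (intro allI impI)
            fix m assume mm: "m2 \<le> m"
            have "c_lat (r m) = L" using latL mm m2_def by simp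
            have i13: "i13 f B (r m)" using invr[of m] unfolding inv_def by blast
            have stj: "c_st (r m) w = j" using eq mm by blast
            have ncl: "\<not> c_cl (r m) w" using nocl[of m] by blast
            have "(w, Suc j) \<in> c_net (r m)"
              using i13[unfolded i13_def, rule_format, of w "Suc j"] w ncl stj Suc.prems \<open>c_lat (r m) = L\<close>
              by simp
            then show "enabled f B (r m) (Deliver w (Suc j))"
              using w stj ncl unfolding enabled_def step_def act.case by simp
          qed
          then obtain m where mm: "m \<ge> m2" "l m = Deliver w (Suc j)" using fair[OF fairDel[OF w(1)]] by blast
          have sd: "step f B (r m) (Deliver w (Suc j)) (r (Suc m))" using stp[of m] mm(2) by simp
          have stj: "c_st (r m) w = j" using eq mm(1) by blast
          have "c_st (r (Suc m)) w = Suc j"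
            using s_deliver[OF sd] nocl[of m] stj by blast
          then show False using lt[rule_format, of "Suc m"] by simp
        qed
      qed
      let ?H = "{..<nW f} - B"
      have "\<forall>w\<in>?H. \<exists>K. \<forall>m\<ge>K. w \<in> c_sg (r m) L"
      proof
        fix w assume "w \<in> ?H" then have w: "w \<notin> B" "w < nW f" by auto
        obtain m where "L \<le> c_st (r m) w" using prog[OF w order.refl] by blast
        then have "w \<in> c_sg (r m) L" using invr[of m] w L2 unfolding inv_def i9_def by blast
        then show "\<exists>K. \<forall>m'\<ge>K. w \<in> c_sg (r m') L"
        proof (intro exI allI impI)
          fix m' assume "w \<in> c_sg (r m) L" "m \<le> m'"
          then show "w \<in> c_sg (r m') L" using sg_mono[of m m' L] by blast
        qed
      qed
      then obtain K where "\<forall>w\<in>?H. \<forall>m\<ge>K. w \<in> c_sg (r m) L"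
        using fin_choice[of ?H "\<lambda>w m. w \<in> c_sg (r m) L"] by blast
      then have "?H \<subseteq> c_sg (r K) L" by blast
      moreover have "c_sg (r K) L \<subseteq> {..<nW f}" using invr[of K] unfolding inv_def i6_def by blast
      ultimately have "card ?H \<le> card (c_sg (r K) L)" by (intro card_mono) (auto intro: finite_subset)
      then show ?thesis using card_honest[OF HB cB] nA'[rule_format, of K] by linarith
    qed
  qed
qed

end

theorem theorem4:
  fixes f :: nat and B :: "nat set" and r :: "nat \<Rightarrow> cfg" and l :: "nat \<Rightarrow> act"
  assumes "B \<subseteq> {..<nW f}" and "card B \<le> f"
    and "brick_run f B r l"
  shows "(\<forall>k. l k = Issue \<longrightarrow>
            (\<exists>k'. committed f (r k') (c_lat (r (Suc k))) \<or> invalidated (r k') (c_lat (r (Suc k)))))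
       \<and> (\<forall>k. l k = Request \<longrightarrow> (\<exists>k'. c_closed (r k') \<noteq> None))"
proof (intro conjI allI impI)
  fix k assume "l k = Issue"
  then show "\<exists>k'. committed f (r k') (c_lat (r (Suc k))) \<or> invalidated (r k') (c_lat (r (Suc k)))"
    using issue_live[OF assms(3,1,2) _ refl] by blast
next
  fix k assume "l k = Request"
  then show "\<exists>k'. c_closed (r k') \<noteq> None" using closes[OF assms(3,1,2)] by blast
qed


end
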